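(* For all $n\ge 0$, the quadruple of statistics $(\operatorname{asc},\operatorname{des},\operatorname{MNA},\operatorname{MND})$ has the same distribution on $S_n(231,312)$ as on $S_n(213,231)$, i.e. $$\sum_{\pi\in S_n(231,312)} t_1^{\operatorname{asc}(\pi)}t_2^{\operatorname{des}(\pi)}t_3^{\operatorname{MNA}(\pi)}t_4^{\operatorname{MND}(\pi)}=\sum_{\sigma\in S_n(213,231)} t_1^{\operatorname{asc}(\sigma)}t_2^{\operatorname{des}(\sigma)}t_3^{\operatorname{MNA}(\sigma)}t_4^{\operatorname{MND}(\sigma)}.$$
   Context: For $n\ge 0$, $S_n$ denotes the set of permutations $\pi=\pi_1\cdots\pi_n$ of $[n]=\{1,\dots,n\}$. $\pi$ avoids a pattern $\tau\in S_k$ if no subsequence $\pi_{i_1}\cdots\pi_{i_k}$ ($i_1<\dots<i_k$) satisfies $\pi_{i_a}<\pi_{i_b}\iff\tau_a<\tau_b$; $S_n(\tau,\rho)$ is the set of permutations in $S_n$ avoiding both $\tau$ and $\rho$. $\operatorname{asc}(\pi)$ (resp. $\operatorname{des}(\pi)$) is the number of $i\in[n-1]$ with $\pi_i<\pi_{i+1}$ (resp. $\pi_i>\pi_{i+1}$). $\operatorname{MNA}(\pi)$ is the maximum size of a set $I\subseteq[n-1]$ such that $\pi_i<\pi_{i+1}$ for all $i\in I$ and $|i-j|\ge 2$ for distinct $i,j\in I$; $\operatorname{MND}(\pi)$ is defined analogously with $\pi_i>\pi_{i+1}$. *)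

theory Defs
  imports Main
begin

text \<open>Permutations of [n] are represented as lists pi = [pi_1,...,pi_n] (0-based list indexing).\<close>

definition perms :: "nat \<Rightarrow> nat list set" where
  "perms n = {xs. distinct xs \<and> set xs = {1..n}}"

definition contains :: "nat list \<Rightarrow> nat list \<Rightarrow> bool" where
  "contains xs tau \<longleftrightarrow> (\<exists>idx :: nat \<Rightarrow> nat.
      strict_mono_on {..<length tau} idx \<and> (\<forall>a<length tau. idx a < length xs) \<and>
      (\<forall>a<length tau. \<forall>b<length tau.
          (xs ! idx a < xs ! idx b \<longleftrightarrow> tau ! a < tau ! b)))"

definition avoids :: "nat list \<Rightarrow> nat list \<Rightarrow> bool" where
  "avoids xs tau \<longleftrightarrow> \<not> contains xs tau"

definition Av2 :: "nat \<Rightarrow> nat list \<Rightarrow> nat list \<Rightarrow> nat list set" where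
  "Av2 n tau rho = {xs \<in> perms n. avoids xs tau \<and> avoids xs rho}"

definition ascset :: "nat list \<Rightarrow> nat set" where
  "ascset xs = {i. Suc i < length xs \<and> xs ! i < xs ! Suc i}"

definition desset :: "nat list \<Rightarrow> nat set" where
  "desset xs = {i. Suc i < length xs \<and> xs ! i > xs ! Suc i}"

definition asc :: "nat list \<Rightarrow> nat" where "asc xs = card (ascset xs)"
definition des :: "nat list \<Rightarrow> nat" where "des xs = card (desset xs)"

definition nonadjacent :: "nat set \<Rightarrow> bool" where
  "nonadjacent I \<longleftrightarrow> (\<forall>i\<in>I. \<forall>j\<in>I. i \<noteq> j \<longrightarrow> i + 2 \<le> j \<or> j + 2 \<le> i)"

definition MNA :: "nat list \<Rightarrow> nat" where
  "MNA xs = Max (card ` {I. I \<subseteq> ascset xs \<and> nonadjacent I})"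

definition MND :: "nat list \<Rightarrow> nat" where
  "MND xs = Max (card ` {I. I \<subseteq> desset xs \<and> nonadjacent I})"

end

theory Submission imports Defs begin


lemma perms_length: "xs \<in> perms n \<Longrightarrow> length xs = n"
  unfolding perms_def by (metis (mono_tags, lifting) card_atLeastAtMost diff_Suc_1 distinct_card mem_Collect_eq)

lemma contains3: "contains xs [p,q,r] \<longleftrightarrow> (\<exists>i j k. i<j \<and> j<k \<and> k<length xs \<and>
   (xs!i<xs!j \<longleftrightarrow> p<q) \<and> (xs!j<xs!i \<longleftrightarrow> q<p) \<and> (xs!i<xs!k \<longleftrightarrow> p<r) \<and>
   (xs!k<xs!i \<longleftrightarrow> r<p) \<and> (xs!j<xs!k \<longleftrightarrow> q<r) \<and> (xs!k<xs!j \<longleftrightarrow> r<q))"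
proof
  assume "contains xs [p,q,r]"
  then obtain idx where sm: "strict_mono_on {..<length [p,q,r]} idx"
    and lt: "\<forall>a<length [p,q,r]. idx a < length xs"
    and H: "\<forall>a<length [p,q,r]. \<forall>b<length [p,q,r]. (xs ! idx a < xs ! idx b \<longleftrightarrow> [p,q,r] ! a < [p,q,r] ! b)"
    unfolding contains_def by blast
  have "idx 0 < idx 1" "idx 1 < idx 2" using sm by (auto simp: strict_mono_on_def)
  moreover have "idx 2 < length xs" using lt by auto
  moreover have "(xs!idx 0<xs!idx 1 \<longleftrightarrow> p<q)" "(xs!idx 1<xs!idx 0 \<longleftrightarrow> q<p)"
     "(xs!idx 0<xs!idx 2 \<longleftrightarrow> p<r)" "(xs!idx 2<xs!idx 0 \<longleftrightarrow> r<p)"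
     "(xs!idx 1<xs!idx 2 \<longleftrightarrow> q<r)" "(xs!idx 2<xs!idx 1 \<longleftrightarrow> r<q)"
    using H[rule_format, of 0 1] H[rule_format, of 1 0] H[rule_format, of 0 2] H[rule_format, of 2 0]
      H[rule_format, of 1 2] H[rule_format, of 2 1] by auto
  ultimately show "\<exists>i j k. i<j \<and> j<k \<and> k<length xs \<and>
   (xs!i<xs!j \<longleftrightarrow> p<q) \<and> (xs!j<xs!i \<longleftrightarrow> q<p) \<and> (xs!i<xs!k \<longleftrightarrow> p<r) \<and>
   (xs!k<xs!i \<longleftrightarrow> r<p) \<and> (xs!j<xs!k \<longleftrightarrow> q<r) \<and> (xs!k<xs!j \<longleftrightarrow> r<q)" by blast
next
  assume "\<exists>i j k. i<j \<and> j<k \<and> k<length xs \<and>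
   (xs!i<xs!j \<longleftrightarrow> p<q) \<and> (xs!j<xs!i \<longleftrightarrow> q<p) \<and> (xs!i<xs!k \<longleftrightarrow> p<r) \<and>
   (xs!k<xs!i \<longleftrightarrow> r<p) \<and> (xs!j<xs!k \<longleftrightarrow> q<r) \<and> (xs!k<xs!j \<longleftrightarrow> r<q)"
  then obtain i j k where A: "i<j" "j<k" "k<length xs"
   "(xs!i<xs!j \<longleftrightarrow> p<q)" "(xs!j<xs!i \<longleftrightarrow> q<p)" "(xs!i<xs!k \<longleftrightarrow> p<r)"
   "(xs!k<xs!i \<longleftrightarrow> r<p)" "(xs!j<xs!k \<longleftrightarrow> q<r)" "(xs!k<xs!j \<longleftrightarrow> r<q)" by blast
  define idx where "idx = (\<lambda>a::nat. if a = 0 then i else if a = 1 then j else k)"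
  have three: "\<And>a::nat. a < 3 \<Longrightarrow> a = 0 \<or> a = 1 \<or> a = 2" by arith
  have "strict_mono_on {..<length [p,q,r]} idx"
    unfolding strict_mono_on_def
  proof (intro allI impI)
    fix a b assume "a \<in> {..<length [p,q,r]} \<and> b \<in> {..<length [p,q,r]} \<and> a < b"
    then have ab: "a \<in> {..<length [p,q,r]}" "b \<in> {..<length [p,q,r]}" "a < b" by auto
    then have "a = 0 \<or> a = 1 \<or> a = 2" "b = 0 \<or> b = 1 \<or> b = 2" using three by auto
    then show "idx a < idx b" using ab(3) A(1,2) unfolding idx_def by (elim disjE) simp_all
  qed
  moreover have "\<forall>a<length [p,q,r]. idx a < length xs"
  proof (intro allI impI)
    fix a assume "a < length [p,q,r]"
    then have "a = 0 \<or> a = 1 \<or> a = 2" using three by auto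
    then show "idx a < length xs" using A(1-3) unfolding idx_def by (elim disjE) simp_all
  qed
  moreover have "\<forall>a<length [p,q,r]. \<forall>b<length [p,q,r]. (xs ! idx a < xs ! idx b \<longleftrightarrow> [p,q,r] ! a < [p,q,r] ! b)"
  proof (intro allI impI)
    fix a b assume "a < length [p,q,r]" "b < length [p,q,r]"
    then have "a = 0 \<or> a = 1 \<or> a = 2" "b = 0 \<or> b = 1 \<or> b = 2" using three by auto
    then show "(xs ! idx a < xs ! idx b \<longleftrightarrow> [p,q,r] ! a < [p,q,r] ! b)"
      using A(4-9) unfolding idx_def by (elim disjE) simp_all
  qed
  ultimately show "contains xs [p,q,r]" unfolding contains_def by blast
qed

lemma av231: "avoids xs [2,3,1] \<longleftrightarrow> \<not>(\<exists>i j k. i<j \<and> j<k \<and> k<length xs \<and> xs!k<xs!i \<and> xs!i<xs!j)"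
  unfolding avoids_def contains3
proof (intro arg_cong[where f=Not] iffI)
  assume "\<exists>i j k. i<j \<and> j<k \<and> k<length xs \<and> xs!k<xs!i \<and> xs!i<xs!j"
  then obtain i j k where h: "i<j" "j<k" "k<length xs" "xs!k<xs!i" "xs!i<xs!j" by blast
  show "\<exists>i j k. i<j \<and> j<k \<and> k<length xs \<and> (xs!i<xs!j \<longleftrightarrow> (2::nat)<3) \<and> (xs!j<xs!i \<longleftrightarrow> (3::nat)<2) \<and> (xs!i<xs!k \<longleftrightarrow> (2::nat)<1) \<and>
   (xs!k<xs!i \<longleftrightarrow> (1::nat)<2) \<and> (xs!j<xs!k \<longleftrightarrow> (3::nat)<1) \<and> (xs!k<xs!j \<longleftrightarrow> (1::nat)<3)"
    by (rule exI[of _ i], rule exI[of _ j], rule exI[of _ k]) (use h in auto)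
qed auto

lemma av312: "avoids xs [3,1,2] \<longleftrightarrow> \<not>(\<exists>i j k. i<j \<and> j<k \<and> k<length xs \<and> xs!j<xs!k \<and> xs!k<xs!i)"
  unfolding avoids_def contains3
proof (intro arg_cong[where f=Not] iffI)
  assume "\<exists>i j k. i<j \<and> j<k \<and> k<length xs \<and> xs!j<xs!k \<and> xs!k<xs!i"
  then obtain i j k where h: "i<j" "j<k" "k<length xs" "xs!j<xs!k" "xs!k<xs!i" by blast
  show "\<exists>i j k. i<j \<and> j<k \<and> k<length xs \<and> (xs!i<xs!j \<longleftrightarrow> (3::nat)<1) \<and> (xs!j<xs!i \<longleftrightarrow> (1::nat)<3) \<and> (xs!i<xs!k \<longleftrightarrow> (3::nat)<2) \<and>
   (xs!k<xs!i \<longleftrightarrow> (2::nat)<3) \<and> (xs!j<xs!k \<longleftrightarrow> (1::nat)<2) \<and> (xs!k<xs!j \<longleftrightarrow> (2::nat)<1)"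
    by (rule exI[of _ i], rule exI[of _ j], rule exI[of _ k]) (use h in auto)
qed auto

lemma av213: "avoids xs [2,1,3] \<longleftrightarrow> \<not>(\<exists>i j k. i<j \<and> j<k \<and> k<length xs \<and> xs!j<xs!i \<and> xs!i<xs!k)"
  unfolding avoids_def contains3
proof (intro arg_cong[where f=Not] iffI)
  assume "\<exists>i j k. i<j \<and> j<k \<and> k<length xs \<and> xs!j<xs!i \<and> xs!i<xs!k"
  then obtain i j k where h: "i<j" "j<k" "k<length xs" "xs!j<xs!i" "xs!i<xs!k" by blast
  show "\<exists>i j k. i<j \<and> j<k \<and> k<length xs \<and> (xs!i<xs!j \<longleftrightarrow> (2::nat)<1) \<and> (xs!j<xs!i \<longleftrightarrow> (1::nat)<2) \<and> (xs!i<xs!k \<longleftrightarrow> (2::nat)<3) \<and>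
   (xs!k<xs!i \<longleftrightarrow> (3::nat)<2) \<and> (xs!j<xs!k \<longleftrightarrow> (1::nat)<3) \<and> (xs!k<xs!j \<longleftrightarrow> (3::nat)<1)"
    by (rule exI[of _ i], rule exI[of _ j], rule exI[of _ k]) (use h in auto)
qed auto



definition rk :: "(nat \<Rightarrow> nat \<Rightarrow> bool) \<Rightarrow> nat \<Rightarrow> nat \<Rightarrow> nat" where
  "rk R n a = Suc (card {b. b<n \<and> R b a})"
definition mk :: "(nat \<Rightarrow> nat \<Rightarrow> bool) \<Rightarrow> nat \<Rightarrow> nat list" where
  "mk R n = map (rk R n) [0..<n]"

definition sto :: "(nat \<Rightarrow> nat \<Rightarrow> bool) \<Rightarrow> bool" where
  "sto R \<longleftrightarrow> (\<forall>a. \<not> R a a) \<and> (\<forall>a b c. R a b \<longrightarrow> R b c \<longrightarrow> R a c) \<and> (\<forall>a b. a \<noteq> b \<longrightarrow> R a b \<or> R b a)"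

lemma rk_less: assumes "sto R" "R a b" "a < n" shows "rk R n a < rk R n b"
proof -
  have "{c. c<n \<and> R c a} \<subset> {c. c<n \<and> R c b}"
    using assms unfolding sto_def by blast
  then show ?thesis unfolding rk_def by (simp add: psubset_card_mono)
qed

lemma rk_iff: assumes "sto R" "a < n" "b < n" shows "rk R n a < rk R n b \<longleftrightarrow> R a b"
proof
  assume "rk R n a < rk R n b"
  show "R a b"
  proof (rule ccontr)
    assume "\<not> R a b"
    then have "a = b \<or> R b a" using assms(1) unfolding sto_def by blast
    then show False using rk_less[OF assms(1) _ assms(3)] \<open>rk R n a < rk R n b\<close> by fastforce
  qed
qed (use rk_less assms in blast)

lemma rk_range: assumes "sto R" "a < n" shows "1 \<le> rk R n a \<and> rk R n a \<le> n"
proof -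
  have "{c. c<n \<and> R c a} \<subseteq> {..<n} - {a}" using assms unfolding sto_def by auto
  then have "card {c. c<n \<and> R c a} \<le> card ({..<n} - {a})" by (intro card_mono) auto
  then show ?thesis using assms unfolding rk_def by auto
qed

lemma mk_perm: assumes "sto R" shows "mk R n \<in> perms n"
proof -
  have inj: "inj_on (rk R n) {0..<n}"
  proof (rule inj_onI)
    fix a b assume "a \<in> {0..<n}" "b \<in> {0..<n}" "rk R n a = rk R n b"
    then show "a = b" using rk_iff[OF assms, of a n b] rk_iff[OF assms, of b n a] assms
      unfolding sto_def by auto
  qed
  then have d: "distinct (mk R n)" unfolding mk_def by (simp add: distinct_map)
  have s: "set (mk R n) \<subseteq> {1..n}" unfolding mk_def using rk_range[OF assms] by auto
  have "card (set (mk R n)) = n" using d distinct_card[OF d] unfolding mk_def by simp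
  then have "set (mk R n) = {1..n}" using s by (intro card_subset_eq) auto
  then show ?thesis using d unfolding perms_def by auto
qed

lemma mk_nth: "a < n \<Longrightarrow> mk R n ! a = rk R n a" unfolding mk_def by simp
lemma mk_len: "length (mk R n) = n" unfolding mk_def by simp

lemma perm_rank: assumes "xs \<in> perms n" "a < n"
  shows "xs ! a = Suc (card {b. b<n \<and> xs!b < xs!a})"
proof -
  have d: "distinct xs" and s: "set xs = {1..n}" and l: "length xs = n"
    using assms perms_length unfolding perms_def by auto
  have xa: "xs!a \<in> {1..n}" using s l assms(2) nth_mem by blast
  have "nth xs ` {b. b<n \<and> xs!b < xs!a} = {v \<in> set xs. v < xs!a}"
    using l by (auto simp: set_conv_nth)
  also have "\<dots> = {1..<xs!a}" using s xa by auto
  finally have im: "nth xs ` {b. b<n \<and> xs!b < xs!a} = {1..<xs!a}" .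
  have "inj_on (nth xs) {b. b<n \<and> xs!b < xs!a}" using d l by (intro inj_on_nth) auto
  then have "card {b. b<n \<and> xs!b < xs!a} = card {1..<xs!a}"
    using im card_image by fastforce
  then show ?thesis using xa by simp
qed

lemma perm_eq_mk: assumes "xs \<in> perms n" "\<And>a b. a<n \<Longrightarrow> b<n \<Longrightarrow> (xs!a < xs!b \<longleftrightarrow> R a b)"
  shows "xs = mk R n"
proof (rule nth_equalityI)
  show "length xs = length (mk R n)" using perms_length[OF assms(1)] mk_len by simp
  fix a assume "a < length xs"
  then have a: "a < n" using perms_length[OF assms(1)] by simp
  have "xs ! a = Suc (card {b. b<n \<and> xs!b < xs!a})" using perm_rank[OF assms(1) a] .
  also have "{b. b<n \<and> xs!b < xs!a} = {b. b<n \<and> R b a}" using assms(2) a by auto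
  finally show "xs ! a = mk R n ! a" using mk_nth[OF a] unfolding rk_def by simp
qed



definition udw :: "nat list \<Rightarrow> bool list" where
  "udw xs = map (\<lambda>i. xs!i < xs!Suc i) [0..<length xs - 1]"
definition AS :: "bool list \<Rightarrow> nat set" where "AS w = {i. i<length w \<and> w!i}"
definition DS :: "bool list \<Rightarrow> nat set" where "DS w = {i. i<length w \<and> \<not> w!i}"

lemma udw_len: "length (udw xs) = length xs - 1" unfolding udw_def by simp
lemma udw_nth: "i < length xs - 1 \<Longrightarrow> udw xs ! i = (xs!i < xs!Suc i)" unfolding udw_def by simp

lemma ascset_udw: "ascset xs = AS (udw xs)"
  unfolding ascset_def AS_def udw_def by auto
lemma desset_udw: assumes "distinct xs" shows "desset xs = DS (udw xs)"
proof (rule set_eqI)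
  fix i
  show "i \<in> desset xs \<longleftrightarrow> i \<in> DS (udw xs)"
  proof (cases "Suc i < length xs")
    case True
    then have ne: "xs!i \<noteq> xs!Suc i" using assms by (simp add: nth_eq_iff_index_eq)
    have "i < length xs - 1" using True by simp
    then have "udw xs ! i = (xs!i < xs!Suc i)" by (rule udw_nth)
    then show ?thesis using True ne unfolding desset_def DS_def by (auto simp: udw_len)
  next
    case False
    then show ?thesis unfolding desset_def DS_def by (auto simp: udw_len)
  qed
qed

definition blk :: "bool list \<Rightarrow> nat \<Rightarrow> nat" where
  "blk w a = card {p. p<a \<and> p<length w \<and> w!p}"

lemma blk_mono: "a \<le> b \<Longrightarrow> blk w a \<le> blk w b"
  unfolding blk_def by (rule card_mono) (simp, blast intro: order_less_le_trans)

lemma blk_lt: assumes "a < b" shows "blk w a < blk w b \<longleftrightarrow> (\<exists>p. a \<le> p \<and> p < b \<and> p < length w \<and> w!p)"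
proof
  assume "blk w a < blk w b"
  show "\<exists>p. a \<le> p \<and> p < b \<and> p < length w \<and> w!p"
  proof (rule ccontr)
    assume "\<not> ?thesis"
    then have "{p. p<a \<and> p<length w \<and> w!p} = {p. p<b \<and> p<length w \<and> w!p}" using assms
      by (auto simp: not_le)
    then show False using \<open>blk w a < blk w b\<close> unfolding blk_def by simp
  qed
next
  assume "\<exists>p. a \<le> p \<and> p < b \<and> p < length w \<and> w!p"
  then obtain p where "a \<le> p" "p < b" "p < length w" "w!p" by blast
  then have "{p. p<a \<and> p<length w \<and> w!p} \<subset> {p. p<b \<and> p<length w \<and> w!p}" using assms
  proof (intro psubsetI subsetI)
    fix x assume "x \<in> {p. p<a \<and> p<length w \<and> w!p}"
    then show "x \<in> {p. p<b \<and> p<length w \<and> w!p}" using assms by simp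
  next
    have "p \<in> {p. p<b \<and> p<length w \<and> w!p}" "p \<notin> {p. p<a \<and> p<length w \<and> w!p}"
      using \<open>a \<le> p\<close> \<open>p < b\<close> \<open>p < length w\<close> \<open>w!p\<close> by auto
    then show "{p. p<a \<and> p<length w \<and> w!p} \<noteq> {p. p<b \<and> p<length w \<and> w!p}" by blast
  qed
  then show "blk w a < blk w b" unfolding blk_def by (simp add: psubset_card_mono)
qed

definition R1 :: "bool list \<Rightarrow> nat \<Rightarrow> nat \<Rightarrow> bool" where
  "R1 w a b = (blk w a < blk w b \<or> (blk w a = blk w b \<and> b < a))"
definition R2 :: "bool list \<Rightarrow> nat \<Rightarrow> nat \<Rightarrow> bool" where
  "R2 w a b = ((a<b \<and> a<length w \<and> w!a) \<or> (b<a \<and> \<not>(b<length w \<and> w!b)))"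

lemma sto_R1: "sto (R1 w)" unfolding sto_def R1_def by auto
lemma sto_R2: "sto (R2 w)" unfolding sto_def
proof (intro conjI allI impI)
  fix a show "\<not> R2 w a a" by (simp add: R2_def)
next
  fix a b c assume "R2 w a b" "R2 w b c" then show "R2 w a c" unfolding R2_def
    by (cases a b rule: linorder_cases; cases b c rule: linorder_cases; cases a c rule: linorder_cases) auto
next
  fix a b :: nat assume "a \<noteq> b" then show "R2 w a b \<or> R2 w b a" unfolding R2_def by (cases "a < b") auto
qed

lemma R1_step: "R1 w i (Suc i) \<longleftrightarrow> (i < length w \<and> w!i)"
proof -
  have e: "(\<exists>p. i \<le> p \<and> p < Suc i \<and> p < length w \<and> w!p) \<longleftrightarrow> (i < length w \<and> w!i)"
  proof
    assume "\<exists>p. i \<le> p \<and> p < Suc i \<and> p < length w \<and> w!p"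
    then obtain p where "i \<le> p" "p < Suc i" "p < length w" "w!p" by blast
    moreover then have "p = i" by simp
    ultimately show "i < length w \<and> w!i" by simp
  qed blast
  have "R1 w i (Suc i) \<longleftrightarrow> blk w i < blk w (Suc i)" unfolding R1_def by simp
  then show ?thesis using blk_lt[of i "Suc i" w] e by simp
qed
lemma R2_step: "R2 w i (Suc i) \<longleftrightarrow> (i < length w \<and> w!i)"
  unfolding R2_def by auto

lemma udw_mk: assumes "sto R" "length w = n - 1" "\<And>i. R i (Suc i) \<longleftrightarrow> (i < length w \<and> w!i)"
  shows "udw (mk R n) = w"
proof (rule nth_equalityI)
  show "length (udw (mk R n)) = length w" using assms by (simp add: udw_len mk_len)
  fix i assume "i < length (udw (mk R n))"
  then have i: "i < n - 1" by (simp add: udw_len mk_len)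
  have "udw (mk R n) ! i = (mk R n ! i < mk R n ! Suc i)" using i by (simp add: udw_nth mk_len)
  also have "\<dots> = R i (Suc i)"
  proof -
    have "i < n" "Suc i < n" using i by arith+
    then show ?thesis using mk_nth rk_iff[OF assms(1)] by simp
  qed
  also have "\<dots> = w!i" using assms i by auto
  finally show "udw (mk R n) ! i = w ! i" .
qed



lemma asc_exists: "a<b \<Longrightarrow> b<length (xs::nat list) \<Longrightarrow> xs!a<xs!b \<Longrightarrow> \<exists>p. a \<le> p \<and> p < b \<and> xs!p < xs!Suc p"
proof (induction b)
  case 0 then show ?case by simp
next
  case (Suc b)
  show ?case
  proof (cases "xs!b < xs!Suc b")
    case True then show ?thesis using Suc.prems by (intro exI[of _ b]) auto
  next
    case False
    then have "xs!a < xs!b" using Suc.prems by linarith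
    then have "a < b" using Suc.prems False by (metis less_SucE not_less_iff_gr_or_eq order_less_trans)
    then show ?thesis using Suc.IH Suc.prems \<open>xs!a < xs!b\<close> by (meson Suc_lessD less_SucI)
  qed
qed

lemma dist_nth: "distinct xs \<Longrightarrow> i < length xs \<Longrightarrow> j < length xs \<Longrightarrow> i \<noteq> j \<Longrightarrow> xs!i \<noteq> xs!j"
  by (simp add: nth_eq_iff_index_eq)

lemma lay_asc: assumes "avoids xs [2,3,1]" "avoids xs [3,1,2]" "distinct xs" "a \<le> p" "p < b"
  "b < length xs" "xs!p < xs!Suc p" shows "xs!a < xs!b"
proof -
  have N1: "\<And>i j k. i<j \<Longrightarrow> j<k \<Longrightarrow> k<length xs \<Longrightarrow> \<not>(xs!k<xs!i \<and> xs!i<xs!j)"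
    using assms(1) unfolding av231 by blast
  have N2: "\<And>i j k. i<j \<Longrightarrow> j<k \<Longrightarrow> k<length xs \<Longrightarrow> \<not>(xs!j<xs!k \<and> xs!k<xs!i)"
    using assms(2) unfolding av312 by blast
  have D: "\<And>i j. i < length xs \<Longrightarrow> j < length xs \<Longrightarrow> i \<noteq> j \<Longrightarrow> xs!i < xs!j \<or> xs!j < xs!i"
    using dist_nth[OF assms(3)] by (meson linorder_neqE_nat)
  have h1: "xs!p < xs!b"
  proof (cases "b = Suc p")
    case True then show ?thesis using assms by simp
  next
    case False
    then have "Suc p < b" using assms by simp
    then show ?thesis using N1[of p "Suc p" b] D[of p b] assms by auto
  qed
  have h2: "xs!a < xs!Suc p"
  proof (cases "a = p")
    case True then show ?thesis using assms by simp
  next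
    case False
    then have "a < p" using assms by simp
    then show ?thesis using N2[of a p "Suc p"] D[of a "Suc p"] assms by auto
  qed
  show ?thesis
  proof (cases "a = p")
    case True then show ?thesis using h1 by simp
  next
    case False
    then have ap: "a < p" using assms by simp
    show ?thesis
    proof (cases "b = Suc p")
      case True then show ?thesis using h2 by simp
    next
      case False
      then have "Suc p < b" using assms by simp
      then show ?thesis using N2[of a p b] D[of a b] h1 ap assms by auto
    qed
  qed
qed


lemma class1_rel: assumes "xs \<in> Av2 n [2,3,1] [3,1,2]" "a < n" "b < n"
  shows "xs!a < xs!b \<longleftrightarrow> R1 (udw xs) a b"
proof -
  have P: "xs \<in> perms n" and A1: "avoids xs [2,3,1]" and A2: "avoids xs [3,1,2]"
    using assms(1) unfolding Av2_def by auto
  have L: "length xs = n" using perms_length[OF P] .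
  have d: "distinct xs" using P unfolding perms_def by auto
  have key: "xs!a' < xs!b' \<longleftrightarrow> blk (udw xs) a' < blk (udw xs) b'" if ab: "a' < b'" "b' < n" for a' b'
  proof -
    have "blk (udw xs) a' < blk (udw xs) b' \<longleftrightarrow>
        (\<exists>p. a' \<le> p \<and> p < b' \<and> p < length (udw xs) \<and> udw xs ! p)" using blk_lt[OF ab(1)] .
    also have "\<dots> \<longleftrightarrow> (\<exists>p. a' \<le> p \<and> p < b' \<and> xs!p < xs!Suc p)"
      using ab L by (auto simp: udw_len udw_nth)
    also have "\<dots> \<longleftrightarrow> xs!a' < xs!b'"
      using asc_exists[of a' b' xs] lay_asc[OF A1 A2 d, of a' _ b'] ab L by auto
    finally show ?thesis by simp
  qed
  show ?thesis
  proof (cases a b rule: linorder_cases)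
    case less then show ?thesis using key[OF less assms(3)] blk_mono[of a b] unfolding R1_def by auto
  next
    case equal then show ?thesis unfolding R1_def by simp
  next
    case greater
    have "xs!a \<noteq> xs!b" using dist_nth[OF d] greater L assms by auto
    then show ?thesis using key[OF greater assms(2)] blk_mono[of b a "udw xs"] greater unfolding R1_def by auto
  qed
qed

lemma class2_rel: assumes "xs \<in> Av2 n [2,1,3] [2,3,1]" "a < n" "b < n"
  shows "xs!a < xs!b \<longleftrightarrow> R2 (udw xs) a b"
proof -
  have P: "xs \<in> perms n" and A1: "avoids xs [2,1,3]" and A2: "avoids xs [2,3,1]"
    using assms(1) unfolding Av2_def by auto
  have L: "length xs = n" using perms_length[OF P] .
  have d: "distinct xs" using P unfolding perms_def by auto
  have N1: "\<And>i j k. i<j \<Longrightarrow> j<k \<Longrightarrow> k<length xs \<Longrightarrow> \<not>(xs!j<xs!i \<and> xs!i<xs!k)"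
    using A1 unfolding av213 by blast
  have N2: "\<And>i j k. i<j \<Longrightarrow> j<k \<Longrightarrow> k<length xs \<Longrightarrow> \<not>(xs!k<xs!i \<and> xs!i<xs!j)"
    using A2 unfolding av231 by blast
  have D: "\<And>i j. i < length xs \<Longrightarrow> j < length xs \<Longrightarrow> i \<noteq> j \<Longrightarrow> xs!i < xs!j \<or> xs!j < xs!i"
    using dist_nth[OF d] by (meson linorder_neqE_nat)
  have key: "xs!a' < xs!b' \<longleftrightarrow> (a' < length (udw xs) \<and> udw xs ! a')" if ab: "a' < b'" "b' < n" for a' b'
  proof -
    have a1: "a' < length (udw xs)" using ab L by (simp add: udw_len)
    have "xs!a' < xs!b' \<longleftrightarrow> xs!a' < xs!Suc a'"
    proof (cases "b' = Suc a'")
      case True then show ?thesis by simp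
    next
      case False
      then have "Suc a' < b'" using ab by simp
      then show ?thesis using N1[of a' "Suc a'" b'] N2[of a' "Suc a'" b'] D[of a' b'] D[of a' "Suc a'"] ab L
        by auto
    qed
    then show ?thesis using a1 by (simp add: udw_nth udw_len)
  qed
  show ?thesis
  proof (cases a b rule: linorder_cases)
    case less then show ?thesis using key[OF less assms(3)] unfolding R2_def by auto
  next
    case equal then show ?thesis unfolding R2_def by simp
  next
    case greater
    have "xs!a \<noteq> xs!b" using dist_nth[OF d] greater L assms by auto
    then show ?thesis using key[OF greater assms(2)] greater unfolding R2_def by auto
  qed
qed

lemma mk1_in: "mk (R1 w) n \<in> Av2 n [2,3,1] [3,1,2]"
proof -
  let ?x = "mk (R1 w) n"
  have rel: "\<And>a b. a < n \<Longrightarrow> b < n \<Longrightarrow> (?x!a < ?x!b \<longleftrightarrow> R1 w a b)"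
    using mk_nth rk_iff[OF sto_R1] by simp
  have "avoids ?x [2,3,1]" unfolding av231 mk_len
  proof
    assume "\<exists>i j k. i < j \<and> j < k \<and> k < n \<and> ?x ! k < ?x ! i \<and> ?x ! i < ?x ! j"
    then obtain i j k where "i < j" "j < k" "k < n" "R1 w k i" "R1 w i j" using rel by force
    then show False using blk_mono[of i j w] blk_mono[of j k w] unfolding R1_def by auto
  qed
  moreover have "avoids ?x [3,1,2]" unfolding av312 mk_len
  proof
    assume "\<exists>i j k. i < j \<and> j < k \<and> k < n \<and> ?x ! j < ?x ! k \<and> ?x ! k < ?x ! i"
    then obtain i j k where "i < j" "j < k" "k < n" "R1 w j k" "R1 w k i" using rel by force
    then show False using blk_mono[of i j w] blk_mono[of j k w] unfolding R1_def by auto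
  qed
  ultimately show ?thesis using mk_perm[OF sto_R1] unfolding Av2_def by auto
qed

lemma mk2_in: "mk (R2 w) n \<in> Av2 n [2,1,3] [2,3,1]"
proof -
  let ?x = "mk (R2 w) n"
  have rel: "\<And>a b. a < n \<Longrightarrow> b < n \<Longrightarrow> (?x!a < ?x!b \<longleftrightarrow> R2 w a b)"
    using mk_nth rk_iff[OF sto_R2] by simp
  have "avoids ?x [2,1,3]" unfolding av213 mk_len
  proof
    assume "\<exists>i j k. i < j \<and> j < k \<and> k < n \<and> ?x ! j < ?x ! i \<and> ?x ! i < ?x ! k"
    then obtain i j k where "i < j" "j < k" "k < n" "R2 w j i" "R2 w i k" using rel by force
    then show False unfolding R2_def by auto
  qed
  moreover have "avoids ?x [2,3,1]" unfolding av231 mk_len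
  proof
    assume "\<exists>i j k. i < j \<and> j < k \<and> k < n \<and> ?x ! k < ?x ! i \<and> ?x ! i < ?x ! j"
    then obtain i j k where "i < j" "j < k" "k < n" "R2 w k i" "R2 w i j" using rel by force
    then show False unfolding R2_def by auto
  qed
  ultimately show ?thesis using mk_perm[OF sto_R2] unfolding Av2_def by auto
qed

lemma bij1: "bij_betw udw (Av2 n [2,3,1] [3,1,2]) {w. length w = n - 1}"
proof (rule bij_betw_byWitness[where f' = "\<lambda>w. mk (R1 w) n"])
  show "\<forall>xs\<in>Av2 n [2,3,1] [3,1,2]. mk (R1 (udw xs)) n = xs"
    using class1_rel perm_eq_mk unfolding Av2_def by (metis (no_types, lifting) Av2_def mem_Collect_eq)
  show "\<forall>w\<in>{w. length w = n - 1}. udw (mk (R1 w) n) = w"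
    using udw_mk[OF sto_R1] R1_step by auto
  show "udw ` Av2 n [2,3,1] [3,1,2] \<subseteq> {w. length w = n - 1}"
    using perms_length unfolding Av2_def by (auto simp: udw_len)
  show "(\<lambda>w. mk (R1 w) n) ` {w. length w = n - 1} \<subseteq> Av2 n [2,3,1] [3,1,2]"
    using mk1_in by auto
qed

lemma bij2: "bij_betw udw (Av2 n [2,1,3] [2,3,1]) {w. length w = n - 1}"
proof (rule bij_betw_byWitness[where f' = "\<lambda>w. mk (R2 w) n"])
  show "\<forall>xs\<in>Av2 n [2,1,3] [2,3,1]. mk (R2 (udw xs)) n = xs"
    using class2_rel perm_eq_mk unfolding Av2_def by (metis (no_types, lifting) Av2_def mem_Collect_eq)
  show "\<forall>w\<in>{w. length w = n - 1}. udw (mk (R2 w) n) = w"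
    using udw_mk[OF sto_R2] R2_step by auto
  show "udw ` Av2 n [2,1,3] [2,3,1] \<subseteq> {w. length w = n - 1}"
    using perms_length unfolding Av2_def by (auto simp: udw_len)
  show "(\<lambda>w. mk (R2 w) n) ` {w. length w = n - 1} \<subseteq> Av2 n [2,1,3] [2,3,1]"
    using mk2_in by auto
qed

definition GG :: "'a::comm_semiring_1 \<Rightarrow> 'a \<Rightarrow> 'a \<Rightarrow> 'a \<Rightarrow> bool list \<Rightarrow> 'a" where
  "GG t1 t2 t3 t4 w = t1 ^ card (AS w) * t2 ^ card (DS w) *
     t3 ^ Max (card ` {I. I \<subseteq> AS w \<and> nonadjacent I}) * t4 ^ Max (card ` {I. I \<subseteq> DS w \<and> nonadjacent I})"

lemma F_GG: "distinct xs \<Longrightarrow> t1 ^ asc xs * t2 ^ des xs * t3 ^ MNA xs * t4 ^ MND xs = GG t1 t2 t3 t4 (udw xs)"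
  unfolding GG_def asc_def des_def MNA_def MND_def by (simp add: ascset_udw desset_udw)

theorem theorem16:
  fixes n :: nat and t1 t2 t3 t4 :: "'a :: comm_semiring_1"
  shows "(\<Sum>\<pi>\<in>Av2 n [2,3,1] [3,1,2]. t1 ^ asc \<pi> * t2 ^ des \<pi> * t3 ^ MNA \<pi> * t4 ^ MND \<pi>)
       = (\<Sum>\<sigma>\<in>Av2 n [2,1,3] [2,3,1]. t1 ^ asc \<sigma> * t2 ^ des \<sigma> * t3 ^ MNA \<sigma> * t4 ^ MND \<sigma>)"
proof -
  have "(\<Sum>\<pi>\<in>Av2 n [2,3,1] [3,1,2]. t1 ^ asc \<pi> * t2 ^ des \<pi> * t3 ^ MNA \<pi> * t4 ^ MND \<pi>)
      = (\<Sum>\<pi>\<in>Av2 n [2,3,1] [3,1,2]. GG t1 t2 t3 t4 (udw \<pi>))"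
    by (rule sum.cong) (auto simp: Av2_def perms_def F_GG)
  also have "\<dots> = (\<Sum>w\<in>{w. length w = n - 1}. GG t1 t2 t3 t4 w)"
    by (rule sum.reindex_bij_betw[OF bij1])
  also have "\<dots> = (\<Sum>\<sigma>\<in>Av2 n [2,1,3] [2,3,1]. GG t1 t2 t3 t4 (udw \<sigma>))"
    by (rule sum.reindex_bij_betw[OF bij2, symmetric])
  also have "\<dots> = (\<Sum>\<sigma>\<in>Av2 n [2,1,3] [2,3,1]. t1 ^ asc \<sigma> * t2 ^ des \<sigma> * t3 ^ MNA \<sigma> * t4 ^ MND \<sigma>)"
    by (rule sum.cong) (auto simp: Av2_def perms_def F_GG)
  finally show ?thesis .
qed


end
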